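(* Let $A$ be a vector bundle over $M$, $X$ a vector field of degree $b-1$ on the graded manifold $A[1]$, and $B_X$ as defined below. Then for all $E_1,\dots,E_b\in\Gamma(A)$, $f\in C^\infty(M)$ and $1\le j\le b$: $B_X(E_1,\dots,fE_j,\dots,E_b)=f\,B_X(E_1,\dots,E_b)+(-1)^j\langle a_X(f),E_1\wedge\cdots\wedge\widehat{E_j}\wedge\cdots\wedge E_b\rangle E_j$.
   Context: $A[1]$ is the graded manifold with function algebra $C^\infty(A[1])=\Gamma(\wedge^\bullet A^\vee)$; a vector field of degree $d$ on $A[1]$ is a graded derivation of degree $d$ of $\Gamma(\wedge^\bullet A^\vee)$. For such $X$ of degree $b-1$, $a_X:C^\infty(M)\to\Gamma(\wedge^{b-1}A^\vee)$ and $\partial_X:\Gamma(A^\vee)\to\Gamma(\wedge^bA^\vee)$ denote the restrictions of $X$ (so $a_X$ is a derivation and $\partial_X(fE)=a_X(f)E+f\partial_X(E)$). The pairing $\langle\eta,X_1\wedge\cdots\wedge X_p\rangle=\eta(X_1,\dots,X_p)$ for $\eta\in\Gamma(\wedge^pA^\vee)$ (and $0$ if degrees differ). $B_X:\Gamma(A)^{\times b}\to\Gamma(A)$ is defined by $\langle W,B_X(E_1,\dots,E_b)\rangle=(-1)^{b-1}\big(\langle\partial_X W,E_1\wedge\cdots\wedge E_b\rangle-\sum_{i=1}^b(-1)^{b-i}\langle a_X\langle W,E_i\rangle,E_1\wedge\cdots\wedge\widehat{E_i}\wedge\cdots\wedge E_b\rangle\big)$ for all $W\in\Gamma(A^\vee)$.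 *)

theory Defs
  imports Main Complex_Main
begin

text \<open>Algebraic model of the sections of a vector bundle A over M.
  The ring 'r plays the role of C^infty(M) (a commutative real algebra),
  'e the role of Gamma(A), a module over 'r via scale.
  Gamma(A^dual): 'r-linear maps 'e => 'r; the pairing <W,E> is W E.
  Gamma(wedge^p A^dual): alternating 'r-multilinear maps on lists of length p
  (value 0 on lists of other length); the pairing <eta, E1 ^ ... ^ Ep> is eta [E1,...,Ep].\<close>

definition dual_sections :: "('r::comm_ring_1 \<Rightarrow> 'e::ab_group_add \<Rightarrow> 'e) \<Rightarrow> ('e \<Rightarrow> 'r) set" where
  "dual_sections scale = {W. \<forall>c x y. W (scale c x + y) = c * W x + W y}"

definition forms :: "('r::comm_ring_1 \<Rightarrow> 'e::ab_group_add \<Rightarrow> 'e) \<Rightarrow> nat \<Rightarrow> ('e list \<Rightarrow> 'r) set" where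
  "forms scale p = {\<eta>.
     (\<forall>xs. length xs \<noteq> p \<longrightarrow> \<eta> xs = 0) \<and>
     (\<forall>xs i c x y. length xs = p \<longrightarrow> i < p \<longrightarrow>
        \<eta> (xs[i := scale c x + y]) = c * \<eta> (xs[i := x]) + \<eta> (xs[i := y])) \<and>
     (\<forall>xs i k. length xs = p \<longrightarrow> i < k \<longrightarrow> k < p \<longrightarrow> xs ! i = xs ! k \<longrightarrow> \<eta> xs = 0)}"

definition omit :: "nat \<Rightarrow> 'a list \<Rightarrow> 'a list" where
  "omit i xs = take i xs @ drop (Suc i) xs"

text \<open>Wedge product of a (b-1)-form alpha with a 1-form W, evaluated on
  [E1,...,Eb]: sum over i=1..b of (-1)^(b-i) alpha(E1..^Ei..Eb) W(Ei).\<close>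
definition wedge1 :: "('e list \<Rightarrow> 'r::comm_ring_1) \<Rightarrow> ('e \<Rightarrow> 'r) \<Rightarrow> 'e list \<Rightarrow> 'r" where
  "wedge1 \<alpha> W xs = (\<Sum>i\<in>{1..length xs}. (-1) ^ (length xs - i) * \<alpha> (omit (i - 1) xs) * W (xs ! (i - 1)))"

text \<open>A vector field X of degree b-1 on A[1], through its restrictions
  a_X : C^infty(M) -> Gamma(wedge^(b-1) A^dual) and d_X : Gamma(A^dual) -> Gamma(wedge^b A^dual).\<close>
definition vector_field_restrictions ::
  "('r::{comm_ring_1,real_algebra_1} \<Rightarrow> 'e::ab_group_add \<Rightarrow> 'e) \<Rightarrow> nat \<Rightarrow>
   ('r \<Rightarrow> 'e list \<Rightarrow> 'r) \<Rightarrow> (('e \<Rightarrow> 'r) \<Rightarrow> 'e list \<Rightarrow> 'r) \<Rightarrow> bool" where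
  "vector_field_restrictions scale b aX dX \<longleftrightarrow>
     (\<forall>f. aX f \<in> forms scale (b - 1)) \<and>
     (\<forall>f g xs. aX (f + g) xs = aX f xs + aX g xs) \<and>
     (\<forall>c f xs. aX (c *\<^sub>R f) xs = c *\<^sub>R aX f xs) \<and>
     (\<forall>f g xs. aX (f * g) xs = f * aX g xs + g * aX f xs) \<and>
     (\<forall>W\<in>dual_sections scale. dX W \<in> forms scale b) \<and>
     (\<forall>W\<in>dual_sections scale. \<forall>V\<in>dual_sections scale. \<forall>xs.
        dX (\<lambda>e. W e + V e) xs = dX W xs + dX V xs) \<and>
     (\<forall>W\<in>dual_sections scale. \<forall>c xs. dX (\<lambda>e. c *\<^sub>R W e) xs = c *\<^sub>R dX W xs) \<and>
     (\<forall>W\<in>dual_sections scale. \<forall>f xs.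
        dX (\<lambda>e. f * W e) xs = wedge1 (aX f) W xs + f * dX W xs)"

definition separated_by_duals :: "('r::comm_ring_1 \<Rightarrow> 'e::ab_group_add \<Rightarrow> 'e) \<Rightarrow> bool" where
  "separated_by_duals scale \<longleftrightarrow>
     (\<forall>u v. (\<forall>W\<in>dual_sections scale. W u = W v) \<longrightarrow> u = v)"

definition is_B :: "('r::comm_ring_1 \<Rightarrow> 'e::ab_group_add \<Rightarrow> 'e) \<Rightarrow> nat \<Rightarrow>
   ('r \<Rightarrow> 'e list \<Rightarrow> 'r) \<Rightarrow> (('e \<Rightarrow> 'r) \<Rightarrow> 'e list \<Rightarrow> 'r) \<Rightarrow> ('e list \<Rightarrow> 'e) \<Rightarrow> bool" where
  "is_B scale b aX dX BX \<longleftrightarrow>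
     (\<forall>Es. length Es = b \<longrightarrow> (\<forall>W\<in>dual_sections scale.
        W (BX Es) = (-1) ^ (b - 1) *
          (dX W Es - (\<Sum>i\<in>{1..b}. (-1) ^ (b - i) * aX (W (Es ! (i - 1))) (omit (i - 1) Es)))))"

end

theory Submission
  imports Defs
begin

lemma dual_add:
  assumes "module scale" "W \<in> dual_sections scale"
  shows "W (x + y) = W x + W y"
proof -
  have "W (scale 1 x + y) = 1 * W x + W y" using assms(2) unfolding dual_sections_def by blast
  then show ?thesis using module.scale_one[OF assms(1)] by simp
qed

lemma dual_scale:
  assumes "module scale" "W \<in> dual_sections scale"
  shows "W (scale c x) = c * W x"
proof -
  have z: "W 0 = 0"
  proof -
    have "W (scale 1 0 + 0) = 1 * W 0 + W 0" using assms(2) unfolding dual_sections_def by blast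
    then show ?thesis using module.scale_one[OF assms(1)] by simp
  qed
  have "W (scale c x + 0) = c * W x + W 0" using assms(2) unfolding dual_sections_def by blast
  then show ?thesis using z by simp
qed

lemma form_scale:
  assumes "module scale" "\<eta> \<in> forms scale p" "length xs = p" "k < p"
  shows "\<eta> (xs[k := scale c (xs ! k)]) = c * \<eta> xs"
proof -
  have lin: "\<And>c x y. \<eta> (xs[k := scale c x + y]) = c * \<eta> (xs[k := x]) + \<eta> (xs[k := y])"
    using assms(2-4) unfolding forms_def by blast
  have z: "\<eta> (xs[k := 0]) = 0"
    using lin[of 1 0 0] module.scale_one[OF assms(1)] by simp
  have "\<eta> (xs[k := scale c (xs ! k) + 0]) = c * \<eta> (xs[k := xs ! k]) + \<eta> (xs[k := 0])"
    by (rule lin)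
  then show ?thesis using z by simp
qed

lemma omit_update_same: "omit i (xs[i := v]) = omit i xs"
  unfolding omit_def by (simp add: take_update_cancel drop_update_cancel)

lemma omit_length: "i < length xs \<Longrightarrow> length (omit i xs) = length xs - 1"
  unfolding omit_def by simp

lemma omit_nth: "i < length xs \<Longrightarrow> k < length xs - 1 \<Longrightarrow>
   omit i xs ! k = (if k < i then xs ! k else xs ! Suc k)"
  unfolding omit_def by (auto simp: nth_append min_def)

lemma omit_update_other:
  assumes "i < length xs" "k < length xs" "i \<noteq> k"
  shows "omit i (xs[k := v]) = (omit i xs)[(if k < i then k else k - 1) := v]"
  using assms
  by (intro nth_equalityI) (auto simp: omit_length omit_nth nth_list_update)

lemma omit_nth_other:
  assumes "i < length xs" "k < length xs" "i \<noteq> k"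
  shows "omit i xs ! (if k < i then k else k - 1) = xs ! k"
  using assms by (auto simp: omit_nth)

lemma sign_lemma:
  assumes "1 \<le> j" "j \<le> b"
  shows "((-1::'r::comm_ring_1) ^ (b - 1)) * (- ((-1) ^ (b - j))) = (-1) ^ j"
proof -
  obtain m where b: "b = j + m" using assms(2) le_Suc_ex by blast
  have "b - 1 = (j - 1) + m" using assms b by simp
  moreover have "b - j = m" using b by simp
  ultimately have "((-1::'r) ^ (b - 1)) * (- ((-1) ^ (b - j))) = (-1)^(j-1) * (-1) * ((-1)^m * (-1)^m)"
    by (simp add: power_add algebra_simps)
  also have "\<dots> = (-1)^(Suc (j-1))" by (simp add: power_add[symmetric] mult_2[symmetric] power_mult)
  also have "\<dots> = (-1)^j" using assms by simp
  finally show ?thesis .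
qed

theorem proposition14p2:
  fixes scale :: "'r::{comm_ring_1,real_algebra_1} \<Rightarrow> 'e::ab_group_add \<Rightarrow> 'e"
    and aX :: "'r \<Rightarrow> 'e list \<Rightarrow> 'r"
    and dX :: "('e \<Rightarrow> 'r) \<Rightarrow> 'e list \<Rightarrow> 'r"
    and BX :: "'e list \<Rightarrow> 'e"
    and b j :: nat and Es :: "'e list" and f :: 'r
  assumes "module scale"
    and "separated_by_duals scale"
    and "vector_field_restrictions scale b aX dX"
    and "is_B scale b aX dX BX"
    and "length Es = b" and "1 \<le> j" and "j \<le> b"
  shows "BX (Es[j - 1 := scale f (Es ! (j - 1))]) =
         scale f (BX Es) + scale ((-1) ^ j * aX f (omit (j - 1) Es)) (Es ! (j - 1))"
proof -
  note M = assms(1)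
  define Es' where "Es' = Es[j - 1 := scale f (Es ! (j - 1))]"
  have len': "length Es' = b" using assms(5) by (simp add: Es'_def)
  have jl: "j - 1 < b" using assms(6,7) by simp
  have aXf: "\<And>g. aX g \<in> forms scale (b - 1)" and
       Leib: "\<And>g h xs. aX (g * h) xs = g * aX h xs + h * aX g xs" and
       dXf: "\<And>W. W \<in> dual_sections scale \<Longrightarrow> dX W \<in> forms scale b"
    using assms(3) unfolding vector_field_restrictions_def by blast+
  define E where "E = Es ! (j - 1)"
  define A where "A = aX f (omit (j - 1) Es)"
  have key: "BX Es' = scale f (BX Es) + scale ((-1) ^ j * A) E"
  proof -
    { fix W assume W: "W \<in> dual_sections scale"
      have D: "dX W Es' = f * dX W Es"
        unfolding Es'_def using form_scale[OF M dXf[OF W] assms(5) jl] .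
      define T where "T = (\<lambda>L i. (-1::'r) ^ (b - i) * aX (W (L ! (i - 1))) (omit (i - 1) L))"
      have Tc: "T Es' i = f * T Es i + (if i = j then (-1) ^ (b - j) * W E * A else 0)"
        if i: "i \<in> {1..b}" for i
      proof (cases "i = j")
        case True
        have "W (Es' ! (j - 1)) = f * W E"
          using dual_scale[OF M W] jl assms(5) by (simp add: Es'_def E_def)
        moreover have "omit (j - 1) Es' = omit (j - 1) Es"
          unfolding Es'_def by (rule omit_update_same)
        ultimately show ?thesis using True unfolding T_def A_def
          by (simp add: Leib algebra_simps E_def)
      next
        case False
        let ?k = "if j - 1 < i - 1 then j - 1 else j - 1 - 1"
        have ne: "i - 1 \<noteq> j - 1" using False i assms(6) by auto
        have il: "i - 1 < length Es" using i assms(5) by auto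
        have el: "Es' ! (i - 1) = Es ! (i - 1)" unfolding Es'_def using ne by simp
        have om: "omit (i - 1) Es' = (omit (i - 1) Es)[?k := scale f (omit (i - 1) Es ! ?k)]"
          unfolding Es'_def
          using omit_update_other[OF il _ ne] omit_nth_other[OF il _ ne] jl assms(5) by simp
        have kl: "?k < b - 1" using ne jl il assms(5) by auto
        have "aX (W (Es ! (i - 1))) (omit (i - 1) Es') = f * aX (W (Es ! (i - 1))) (omit (i - 1) Es)"
          unfolding om by (rule form_scale[OF M aXf]) (use il assms(5) kl in \<open>auto simp: omit_length\<close>)
        then show ?thesis using False unfolding T_def el by (simp add: algebra_simps)
      qed
      have S: "(\<Sum>i\<in>{1..b}. T Es' i) = f * (\<Sum>i\<in>{1..b}. T Es i) + (-1) ^ (b - j) * W E * A"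
        using assms(6,7) by (simp add: Tc sum.distrib sum_distrib_left)
      have B1: "W (BX Es') = (-1) ^ (b - 1) * (dX W Es' - (\<Sum>i\<in>{1..b}. T Es' i))"
        using assms(4) len' W unfolding is_B_def T_def by blast
      have B0: "W (BX Es) = (-1) ^ (b - 1) * (dX W Es - (\<Sum>i\<in>{1..b}. T Es i))"
        using assms(4) assms(5) W unfolding is_B_def T_def by blast
      have "W (BX Es') = f * W (BX Es) + ((-1) ^ (b - 1) * (- ((-1) ^ (b - j)))) * (W E * A)"
        unfolding B1 B0 S D by (simp add: algebra_simps)
      also have "\<dots> = f * W (BX Es) + (-1) ^ j * A * W E"
        unfolding sign_lemma[OF assms(6,7)] by (simp add: algebra_simps)
      also have "\<dots> = W (scale f (BX Es) + scale ((-1) ^ j * A) E)"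
        using dual_add[OF M W] dual_scale[OF M W] by simp
      finally have "W (BX Es') = W (scale f (BX Es) + scale ((-1) ^ j * A) E)" .
    }
    then show "BX Es' = scale f (BX Es) + scale ((-1) ^ j * A) E"
      using assms(2) unfolding separated_by_duals_def by blast
  qed
  then show ?thesis unfolding Es'_def E_def A_def .
qed

end
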